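(* Let $\Sigma,\Gamma$ be finite alphabets, $w\in\Sigma^{\mathbb{N}}$ an infinite word and $h:\Sigma^*\to\Gamma^*$ an injective morphism. If there exists a nonempty word $x$ such that $x^l$ is a factor of $h(w)$ for every $l\in\mathbb{N}$, then $\mathrm{ACE}(w) = \infty$.
   Context: $\mathrm{Fact}_n(w)$ is the set of length-$n$ factors of $w$. For a nonempty word $v$ and integer $p\ge0$, $v^{p/|v|}$ is the prefix of length $p$ of $vvv\cdots$. For a nonempty finite word $u$, $\mathrm{E}(u) = \sup\{ r \in \mathbb{Q} : u = v^r \text{ for some nonempty } v\}$. For an infinite word $w$, $\mathrm{ACE}(w) = \limsup_{n\to\infty}\sup\{\mathrm{E}(u) : u\in\mathrm{Fact}_n(w)\}$. *)

theory Defs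
  imports Complex_Main "HOL-Library.Extended_Real" "HOL-Library.Liminf_Limsup"
begin

definition Fact :: "nat \<Rightarrow> (nat \<Rightarrow> 'a) \<Rightarrow> 'a list set" where
  "Fact n w = {map (\<lambda>i. w (j + i)) [0..<n] | j. True}"

text \<open>v^(p/|v|): the prefix of length p of vvv...\<close>
definition frac_pow :: "'a list \<Rightarrow> nat \<Rightarrow> 'a list" where
  "frac_pow v p = map (\<lambda>i. v ! (i mod length v)) [0..<p]"

text \<open>E(u) = sup { r in Q : u = v^r for some nonempty v }; u = v^r means
  r = p/|v| and u = v^(p/|v|) for some natural p.\<close>
definition E :: "'a list \<Rightarrow> ereal" where
  "E u = Sup {ereal (real p / real (length v)) | v p. v \<noteq> [] \<and> u = frac_pow v p}"

definition ACE :: "(nat \<Rightarrow> 'a) \<Rightarrow> ereal" where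
  "ACE w = limsup (\<lambda>n. Sup (E ` Fact n w))"

definition morph :: "('a \<Rightarrow> 'b list) \<Rightarrow> 'a list \<Rightarrow> 'b list" where
  "morph h u = concat (map h u)"

text \<open>Image h(w) of an infinite word under a nonerasing morphism: its k-th letter
  is the k-th letter of h(w_0 ... w_k) (which has length > k when h is nonerasing).\<close>
definition morph_inf :: "('a \<Rightarrow> 'b list) \<Rightarrow> (nat \<Rightarrow> 'a) \<Rightarrow> nat \<Rightarrow> 'b" where
  "morph_inf h w k = morph h (map w [0..<Suc k]) ! k"

end

theory Submission imports Defs begin

lemma morph_append: "morph h (u @ v) = morph h u @ morph h v"
  by (simp add: morph_def)

lemma nonerasing: assumes "inj (morph h)" shows "h a \<noteq> []"
proof
  assume "h a = []"
  then have "morph h [a] = morph h []" by (simp add: morph_def)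
  with assms show False by (metis injD list.distinct(1))
qed

lemma G_split: "m \<le> m' \<Longrightarrow> morph h (map w [0..<m']) = morph h (map w [0..<m]) @ morph h (map w [m..<m'])"
proof -
  assume "m \<le> m'"
  then obtain d where "m' = m + d" using le_Suc_ex by blast
  then show ?thesis using upt_add_eq_append[of 0 m d] by (simp add: morph_append)
qed

lemma pos_ge: assumes "\<forall>a. h a \<noteq> []" shows "i \<le> length (morph h (map w [0..<i]))"
proof (induction i)
  case (Suc i)
  have "morph h (map w [0..<Suc i]) = morph h (map w [0..<i]) @ h (w i)"
    by (simp add: morph_def)
  moreover have "length (h (w i)) \<ge> 1" using assms by (simp add: Suc_leI)
  ultimately show ?case using Suc by simp
qed simp

lemma H_eq: assumes "\<forall>a. h a \<noteq> []" and "k < length (morph h (map w [0..<m]))"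
  shows "morph_inf h w k = morph h (map w [0..<m]) ! k"
proof -
  have k1: "k < length (morph h (map w [0..<Suc k]))" using pos_ge[OF assms(1), of "Suc k" w] by simp
  show ?thesis
  proof (cases "m \<le> Suc k")
    case True
    show ?thesis unfolding morph_inf_def G_split[OF True, of h w] using assms(2) by (simp add: nth_append)
  next
    case False
    then have "Suc k \<le> m" by simp
    show ?thesis unfolding morph_inf_def G_split[OF \<open>Suc k \<le> m\<close>, of h w] using k1 by (simp add: nth_append)
  qed
qed

lemma seg: assumes "\<forall>a. h a \<noteq> []" and "p \<le> q"
  shows "morph h (map w [p..<q]) = map (\<lambda>t. morph_inf h w (length (morph h (map w [0..<p])) + t))
     [0..<length (morph h (map w [0..<q])) - length (morph h (map w [0..<p]))]"
proof -
  have sp: "morph h (map w [0..<q]) = morph h (map w [0..<p]) @ morph h (map w [p..<q])"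
    using G_split[OF assms(2)] .
  show ?thesis
  proof (rule nth_equalityI)
    show "length (morph h (map w [p..<q])) = length (map (\<lambda>t. morph_inf h w (length (morph h (map w [0..<p])) + t))
     [0..<length (morph h (map w [0..<q])) - length (morph h (map w [0..<p]))])" using sp by simp
    fix t assume "t < length (morph h (map w [p..<q]))"
    then show "morph h (map w [p..<q]) ! t = map (\<lambda>t. morph_inf h w (length (morph h (map w [0..<p])) + t))
     [0..<length (morph h (map w [0..<q])) - length (morph h (map w [0..<p]))] ! t"
      using H_eq[OF assms(1), of "length (morph h (map w [0..<p])) + t" w q] sp by (simp add: nth_append)
  qed
qed

lemma concat_rep_nth: "i < l * length x \<Longrightarrow> concat (replicate l x) ! i = x ! (i mod length x)"
proof (induction l arbitrary: i)
  case (Suc l)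
  show ?case
  proof (cases "i < length x")
    case True then show ?thesis by (simp add: nth_append)
  next
    case False
    then have "i - length x < l * length x" using Suc.prems by simp
    then show ?thesis using False Suc.IH[of "i - length x"] by (simp add: nth_append mod_if)
  qed
qed simp

lemma pigeon: assumes "finite S" "\<forall>i\<in>S. f i < (p::nat)" "card S > p * N"
  shows "\<exists>r<p. card {i\<in>S. f i = r} > N"
proof (rule ccontr)
  assume "\<not> ?thesis"
  then have le: "\<forall>r<p. card {i\<in>S. f i = r} \<le> N" by auto
  have "S = (\<Union>r\<in>{..<p}. {i\<in>S. f i = r})" using assms(2) by auto
  then have "card S \<le> (\<Sum>r\<in>{..<p}. card {i\<in>S. f i = r})" by (metis card_UN_le finite_lessThan)
  also have "\<dots> \<le> (\<Sum>r\<in>{..<p}. N)" using le by (intro sum_mono) auto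
  finally show False using assms(3) by simp
qed

lemma gap: assumes "finite F" "card F \<ge> N + 1" "N \<ge> 1"
  shows "\<exists>a\<in>F. \<exists>b\<in>F. a < b \<and> (b - a) * N \<le> Max F - Min (F::nat set)"
  using assms
proof (induction N arbitrary: F)
  case 0 then show ?case by simp
next
  case (Suc N)
  have ne: "F \<noteq> {}" using Suc.prems by auto
  have mF: "Max F \<in> F" using Suc.prems(1) ne by simp
  show ?case
  proof (cases "N = 0")
    case True
    have "Min F < Max F"
    proof (rule ccontr)
      assume "\<not> Min F < Max F"
      then have "Min F = Max F" using Min_le[OF Suc.prems(1) mF] by linarith
      have "F \<subseteq> {Max F}"
      proof
        fix z assume "z \<in> F"
        then have "Min F \<le> z" "z \<le> Max F" using Suc.prems(1) by simp_all
        then show "z \<in> {Max F}" using \<open>Min F = Max F\<close> by simp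
      qed
      then have "card F \<le> card {Max F}" by (intro card_mono) auto
      then have "card F \<le> 1" by simp
      then show False using Suc.prems(2) True by simp
    qed
    then have lt: "Min F < Max F" .
    have mi: "Min F \<in> F" using ne Suc.prems(1) by simp
    show ?thesis
    proof (rule bexI[OF _ mi], rule bexI[OF _ mF])
      show "Min F < Max F \<and> (Max F - Min F) * Suc N \<le> Max F - Min F" using lt True by simp
    qed
  next
    case False
    define F' where "F' = F - {Max F}"
    have cF': "card F' \<ge> N + 1" using mF Suc.prems unfolding F'_def by (simp add: card_Diff_singleton)
    have fF': "finite F'" using Suc.prems unfolding F'_def by simp
    have neF': "F' \<noteq> {}" using cF' by auto
    obtain a b where ab: "a \<in> F'" "b \<in> F'" "a < b" "(b - a) * N \<le> Max F' - Min F'"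
      using Suc.IH[OF fF' cF'] False by auto
    have sub: "F' \<subseteq> F" unfolding F'_def by auto
    have MF'in': "Max F' \<in> F'" using fF' neF' by simp
    have "Max F' \<le> Max F" using MF'in' sub Suc.prems(1) by (intro Max_ge) auto
    moreover have "Max F' \<noteq> Max F" using MF'in' unfolding F'_def by blast
    ultimately have MF'lt: "Max F' < Max F" by simp
    have minle: "Min F \<le> Min F'" using Suc.prems(1) fF' neF' sub by (simp add: Min_antimono subset_iff)
    have MF'in: "Max F' \<in> F" using MF'in' sub by auto
    have minF'le: "Min F' \<le> Max F'" using fF' neF' by simp
    define D where "D = Max F - Min F"
    define g where "g = Max F - Max F'"
    define d where "d = b - a"
    have DD: "D \<ge> d * N + g" using ab(4) minle MF'lt minF'le unfolding D_def g_def d_def by linarith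
    show ?thesis
    proof (cases "g * Suc N \<le> D")
      case True
      then have "(Max F - Max F') * Suc N \<le> Max F - Min F" unfolding g_def D_def .
      then show ?thesis using MF'in mF MF'lt by blast
    next
      case gF: False
      show ?thesis
      proof (cases "d * Suc N \<le> D")
        case True
        then have "(b - a) * Suc N \<le> Max F - Min F" unfolding d_def D_def .
        moreover have "a \<in> F" "b \<in> F" using ab sub by auto
        ultimately show ?thesis using ab(3) by blast
      next
        case False2: False
        have g1: "D < g + g * N" using gF by simp
        have "d * N < g * N" using DD g1 by linarith
        then have "g > d" by (simp add: mult_less_cancel2)
        then have "D \<ge> d * Suc N + 1" using DD by simp
        then show ?thesis using False2 by simp
      qed
    qed
  qed
qed

lemma period: assumes "u @ W = W @ u" "u \<noteq> []" "length u \<le> length W"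
  shows "W = frac_pow (take (length u) W) (length W)"
proof -
  let ?n = "length u"
  have step: "W ! (t + ?n) = W ! t" if "t + ?n < length W" for t
  proof -
    have "(u @ W) ! (t + ?n) = W ! t" by (simp add: nth_append)
    moreover have "(W @ u) ! (t + ?n) = W ! (t + ?n)" using that by (simp add: nth_append)
    ultimately show ?thesis using assms(1) by simp
  qed
  have stepk: "W ! (t + k * ?n) = W ! t" if "t + k * ?n < length W" for k t
    using that
  proof (induction k)
    case (Suc k)
    have "W ! (t + Suc k * ?n) = W ! ((t + k * ?n) + ?n)" by (simp add: algebra_simps)
    also have "\<dots> = W ! (t + k * ?n)" using Suc.prems by (intro step) (simp add: algebra_simps)
    also have "\<dots> = W ! t" using Suc by simp
    finally show ?case .
  qed simp
  have pos: "?n > 0" using assms(2) by simp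
  show ?thesis
  proof (rule nth_equalityI)
    show "length W = length (frac_pow (take (length u) W) (length W))" by (simp add: frac_pow_def)
    fix i assume i: "i < length W"
    have m: "i mod ?n < ?n" using pos by simp
    have dm: "i mod ?n + (i div ?n) * ?n = i" by (rule mod_div_mult_eq)
    have "W ! i = W ! (i mod ?n + (i div ?n) * ?n)" by (simp only: dm)
    also have "\<dots> = W ! (i mod ?n)" by (rule stepk) (simp only: dm i)
    finally have wi: "W ! i = W ! (i mod ?n)" .
    have lt: "length (take ?n W) = ?n" using assms(3) by simp
    have "frac_pow (take ?n W) (length W) ! i = take ?n W ! (i mod length (take ?n W))"
      using i unfolding frac_pow_def by simp
    also have "\<dots> = W ! (i mod ?n)" using lt m by simp
    finally show "W ! i = frac_pow (take (length u) W) (length W) ! i" using wi by simp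
  qed
qed

lemma E_ge: assumes "v \<noteq> []" "u = frac_pow v p" shows "ereal (real p / real (length v)) \<le> E u"
  unfolding E_def using assms by (intro Sup_upper) blast

lemma map_shift: "map w [a..<c] = map (\<lambda>i. w (a + i)) [0..<c - a]"
  by (rule nth_equalityI) auto

lemma key:
  fixes w :: "nat \<Rightarrow> 'a::finite" and h :: "'a \<Rightarrow> 'b list" and x :: "'b list"
  assumes inj: "inj (morph h)"
    and xne: "x \<noteq> []"
    and occ: "\<forall>l::nat. concat (replicate l x) \<in> Fact (l * length x) (morph_inf h w)"
    and N1: "N \<ge> 1"
  shows "\<exists>a c. N \<le> c - a \<and> ereal (real N) \<le> E (map (\<lambda>i. w (a + i)) [0..<c - a])"
proof -
  have ne: "\<forall>a. h a \<noteq> []" using nonerasing[OF inj] by blast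
  define pos where "pos i = length (morph h (map w [0..<i]))" for i
  define H where "H = morph_inf h w"
  define L where "L = Max (range (\<lambda>a. length (h a)))"
  have hL: "length (h a) \<le> L" for a unfolding L_def by (rule Max_ge) auto
  have L1: "L \<ge> 1" using hL[of undefined] ne by (metis One_nat_def Suc_leI le_trans length_greater_0_conv)
  have pos_Suc: "pos (Suc i) = pos i + length (h (w i))" for i unfolding pos_def by (simp add: morph_def)
  have pos_mono: "pos i < pos i'" if "i < i'" for i i'
  proof -
    have "pos n < pos (Suc n)" for n using ne by (simp add: pos_Suc)
    then show ?thesis using that by (rule lift_Suc_mono_less)
  qed
  have pos_add: "pos (s + k) \<le> pos s + k * L" for s k
  proof (induction k)
    case (Suc k) then show ?case using hL[of "w (s + k)"] by (simp add: pos_Suc)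
  qed simp
  define p where "p = length x"
  have p0: "p > 0" using xne p_def by simp
  define l where "l = L * (N + 1)"
  obtain j where occj: "concat (replicate l x) = map (\<lambda>i. H (j + i)) [0..<l * p]"
    using occ unfolding Fact_def H_def p_def by blast
  have win: "H (j + i) = x ! (i mod p)" if "i < l * p" for i
  proof -
    have "concat (replicate l x) ! i = map (\<lambda>i. H (j + i)) [0..<l * p] ! i" using occj by simp
    then show ?thesis using that concat_rep_nth[of i l x] p_def by simp
  qed
  define s where "s = (LEAST i. j \<le> pos i)"
  have exs: "j \<le> pos j" unfolding pos_def using pos_ge[OF ne] by blast
  have hs1: "j \<le> pos s" unfolding s_def using exs by (rule LeastI)
  have hs2: "pos s < j + L"
  proof (cases s)
    case 0 then show ?thesis using L1 by (simp add: pos_def morph_def)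
  next
    case (Suc s')
    then have "\<not> j \<le> pos s'" unfolding s_def using not_less_Least by (metis lessI s_def)
    then show ?thesis using Suc pos_Suc hL[of "w s'"] by simp
  qed
  define K where "K = (N + 1) * p"
  define S where "S = {s..<s + K}"
  have inS: "j \<le> pos i \<and> pos i < j + l * p" if "i \<in> S" for i
  proof
    have si: "s \<le> i" "i < s + K" using that unfolding S_def by auto
    have "pos s \<le> pos i"
    proof (cases "s = i")
      case False then have "s < i" using si by simp
      then show ?thesis using pos_mono[of s i] by simp
    qed simp
    then show "j \<le> pos i" using hs1 by simp
    define k where "k = i - s"
    have k: "i = s + k" "k < K" using si unfolding k_def by auto
    have "pos i \<le> pos s + k * L" using pos_add[of s k] k(1) by simp
    also have "\<dots> < j + L + k * L" using hs2 by simp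
    also have "\<dots> = j + (k + 1) * L" by simp
    also have "\<dots> \<le> j + K * L"
    proof -
      have "k + 1 \<le> K" using k(2) by simp
      then have "(k + 1) * L \<le> K * L" by (rule mult_le_mono1)
      then show ?thesis by simp
    qed
    also have "K * L = l * p" unfolding K_def l_def by (simp only: mult.commute mult.left_commute)
    finally show "pos i < j + l * p" by simp
  qed
  define phi where "phi i = (pos i - j) mod p" for i
  have finS: "finite S" unfolding S_def by simp
  have phib: "\<forall>i\<in>S. phi i < p" unfolding phi_def using p0 by simp
  have cS: "card S > p * N"
  proof -
    have "card S = (N + 1) * p" unfolding S_def K_def by simp
    moreover have "p * N < (N + 1) * p" using p0 by simp
    ultimately show ?thesis by simp
  qed
  obtain r where r: "r < p" "card {i\<in>S. phi i = r} > N"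
    using pigeon[OF finS phib cS] by blast
  define F where "F = {i\<in>S. phi i = r}"
  have fF: "finite F" unfolding F_def S_def by simp
  have cF: "card F \<ge> N + 1" using r(2) unfolding F_def by simp
  obtain a' b' where ab: "a' \<in> F" "b' \<in> F" "a' < b'" "(b' - a') * N \<le> Max F - Min F"
    using gap[OF fF cF N1] by blast
  have neF: "F \<noteq> {}" using ab by auto
  define a where "a = Min F"
  define c where "c = Max F"
  have aF: "a \<in> F" and cF: "c \<in> F" using fF neF unfolding a_def c_def by auto
  have ac: "a \<le> c" using fF neF unfolding a_def c_def by simp
  define y where "y = map (\<lambda>t. x ! ((r + t) mod p)) [0..<p]"
  have segF: "morph h (map w [q1..<q2]) = concat (replicate ((pos q2 - pos q1) div p) y)"
    if q: "q1 \<in> F" "q2 \<in> F" "q1 \<le> q2" for q1 q2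
  proof -
    have q1S: "j \<le> pos q1" "pos q1 < j + l * p" using inS q unfolding F_def by auto
    have q2S: "j \<le> pos q2" "pos q2 < j + l * p" using inS q unfolding F_def by auto
    have ph: "(pos q1 - j) mod p = r" "(pos q2 - j) mod p = r" using q unfolding F_def phi_def by auto
    have le12: "pos q1 \<le> pos q2" using pos_mono[of q1 q2] q(3) by (cases "q1 = q2") auto
    have "p dvd (pos q2 - j) - (pos q1 - j)" using ph le12 q1S q2S
      by (subst mod_eq_dvd_iff_nat[symmetric]) auto
    then have dv: "p dvd pos q2 - pos q1" using q1S by (metis diff_diff_cancel diff_le_mono le12 diff_diff_left le_add_diff_inverse)
    have sg: "morph h (map w [q1..<q2]) = map (\<lambda>t. H (pos q1 + t)) [0..<pos q2 - pos q1]"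
      using seg[OF ne q(3), of w] unfolding pos_def H_def .
    show ?thesis unfolding sg
    proof (rule nth_equalityI)
      show "length (map (\<lambda>t. H (pos q1 + t)) [0..<pos q2 - pos q1]) = length (concat (replicate ((pos q2 - pos q1) div p) y))"
        using dv by (simp add: y_def length_concat sum_list_replicate)
      fix t assume t: "t < length (map (\<lambda>t. H (pos q1 + t)) [0..<pos q2 - pos q1])"
      then have t': "t < pos q2 - pos q1" by simp
      have "H (pos q1 + t) = H (j + (pos q1 - j + t))" using q1S by simp
      also have "\<dots> = x ! ((pos q1 - j + t) mod p)" using t' q1S q2S by (intro win) linarith
      also have "\<dots> = x ! ((r + t) mod p)" using ph(1) by (metis mod_add_left_eq)
      finally have lhs: "H (pos q1 + t) = x ! ((r + t) mod p)" .
      have "t < ((pos q2 - pos q1) div p) * length y" using dv t' by (simp add: y_def)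
      then have "concat (replicate ((pos q2 - pos q1) div p) y) ! t = y ! (t mod length y)" by (rule concat_rep_nth)
      also have "\<dots> = x ! ((r + t mod p) mod p)" using p0 by (simp add: y_def)
      also have "\<dots> = x ! ((r + t) mod p)" by (metis mod_add_right_eq)
      finally show "map (\<lambda>t. H (pos q1 + t)) [0..<pos q2 - pos q1] ! t = concat (replicate ((pos q2 - pos q1) div p) y) ! t"
        using lhs t' by simp
    qed
  qed
  define u where "u = map w [a'..<b']"
  define W where "W = map w [a..<c]"
  have a'le: "a \<le> a'" unfolding a_def using fF ab by simp
  have b'le: "b' \<le> c" unfolding c_def using fF ab by simp
  obtain m1 where m1: "morph h u = concat (replicate m1 y)" using segF[OF ab(1,2)] ab(3) u_def by auto
  obtain m2 where m2: "morph h W = concat (replicate m2 y)" using segF[OF aF cF ac] W_def by auto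
  have "morph h (u @ W) = morph h (W @ u)"
    unfolding morph_append m1 m2 by (simp add: replicate_add[symmetric] concat_append[symmetric] add.commute)
  then have comm: "u @ W = W @ u" using inj by (simp add: inj_eq)
  have lu: "length u = b' - a'" and lW: "length W = c - a" unfolding u_def W_def by auto
  have "length u > 0" using ab(3) lu by simp
  then have une: "u \<noteq> []" by auto
  have NW: "(b' - a') * N \<le> c - a" using ab(4) unfolding a_def c_def .
  have d1: "b' - a' \<ge> 1" using ab(3) by simp
  have dle: "b' - a' \<le> (b' - a') * N" using N1 by simp
  have luW: "length u \<le> length W" using NW dle unfolding lu lW by (rule_tac order.trans) 
  have lt: "length (take (length u) W) = b' - a'" using luW lu by simp
  have EW0: "ereal (real (length W) / real (length (take (length u) W))) \<le> E W"
  proof (rule E_ge)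
    show "take (length u) W \<noteq> []" using lt d1 by (metis One_nat_def list.size(3) not_one_le_zero)
    show "W = frac_pow (take (length u) W) (length W)" by (rule period[OF comm une luW])
  qed
  have EW: "ereal (real (c - a) / real (b' - a')) \<le> E W" using EW0 unfolding lt lW .
  have "real N \<le> real (c - a) / real (b' - a')"
  proof -
    have "real ((b' - a') * N) \<le> real (c - a)" using NW by (simp only: of_nat_le_iff)
    then have "real N * real (b' - a') \<le> real (c - a)" by (simp add: mult.commute)
    moreover have "real (b' - a') > 0" using d1 by simp
    ultimately show ?thesis by (simp add: pos_le_divide_eq)
  qed
  then have "ereal (real N) \<le> ereal (real (c - a) / real (b' - a'))" by simp
  then have EWN: "ereal (real N) \<le> E W" using EW by (rule order.trans)
  have NN: "N \<le> c - a"
  proof -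
    have "1 * N \<le> (b' - a') * N" using d1 by (rule mult_le_mono1)
    then have "N \<le> (b' - a') * N" by simp
    then show ?thesis using NW by (rule order.trans)
  qed
  have EWN': "ereal (real N) \<le> E (map (\<lambda>i. w (a + i)) [0..<c - a])" 
  proof -
    have Weq: "W = map (\<lambda>i. w (a + i)) [0..<c - a]" unfolding W_def by (rule map_shift)
    show ?thesis using EWN by (simp only: Weq)
  qed
  show ?thesis using NN EWN' by (intro exI[of _ a] exI[of _ c] conjI)
qed

theorem lemma15:
  fixes w :: "nat \<Rightarrow> 'a::finite" and h :: "'a \<Rightarrow> 'b::finite list" and x :: "'b list"
  assumes "inj (morph h)"
    and "x \<noteq> []"
    and "\<forall>l::nat. concat (replicate l x) \<in> Fact (l * length x) (morph_inf h w)"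
  shows "ACE w = \<infinity>"
proof -
  define f where "f n = Sup (E ` Fact n w)" for n
  have big: "\<exists>m\<in>{n..}. z < f m" if "z < \<infinity>" for z n
  proof -
    obtain R :: real where R: "z < ereal R"
    proof (cases z)
      case (real r) then show ?thesis using that(1)[of "r + 1"] by simp
    next
      case PInf then show ?thesis using \<open>z < \<infinity>\<close> by simp
    next
      case MInf then show ?thesis using that(1)[of 0] by simp
    qed
    define N where "N = max n (nat \<lceil>R\<rceil>) + 1"
    have N1: "N \<ge> 1" unfolding N_def by simp
    obtain a c where ac: "N \<le> c - a" "ereal (real N) \<le> E (map (\<lambda>i. w (a + i)) [0..<c - a])"
      using key[OF assms N1] by blast
    have inF: "map (\<lambda>i. w (a + i)) [0..<c - a] \<in> Fact (c - a) w" unfolding Fact_def by blast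
    have "E (map (\<lambda>i. w (a + i)) [0..<c - a]) \<le> f (c - a)" unfolding f_def
      using inF by (intro Sup_upper) blast
    moreover have "R < real N" unfolding N_def by linarith
    ultimately have "z < f (c - a)" using R ac(2)
      by (metis ereal_less_eq(3) less_ereal.simps(1) order_less_le_trans order_less_trans)
    moreover have "n \<le> c - a" using ac(1) unfolding N_def by simp
    ultimately show ?thesis by auto
  qed
  have "(SUP m\<in>{n..}. f m) = \<infinity>" for n
    using big by (simp add: top_ereal_def[symmetric])
  then show ?thesis unfolding ACE_def limsup_INF_SUP f_def by simp
qed

end
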